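(* Let $h\in\mathcal{C}_+([0,1])$. For all $a>0$, \[ 2\int_0^1ds\int_0^{h(s)}dr\,\sigma_{r,s}(h)^a=a(a+1)\int_{[0,1]^2}|s'-s|^{a-1}\,m_h(s,s')\,ds\,ds'. \]
   Context: $\mathcal{C}_+([0,1])$ is the set of non-negative continuous functions on $[0,1]$. For $h\in\mathcal{C}_+([0,1])$ and $s,t\in[0,1]$: $m_h(s,t)=\inf_{u\in[s\wedge t,s\vee t]}h(u)$ and $\sigma_{r,s}(h)=\int_0^1\mathbf{1}_{\{m_h(s,t)\ge r\}}dt$. *)

theory Defs
  imports "HOL-Analysis.Analysis"
begin

definition mh :: "(real \<Rightarrow> real) \<Rightarrow> real \<Rightarrow> real \<Rightarrow> real" where
  "mh h s t = (INF u\<in>{min s t..max s t}. h u)"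

definition sigma_rs :: "real \<Rightarrow> real \<Rightarrow> (real \<Rightarrow> real) \<Rightarrow> real" where
  "sigma_rs r s h = (LINT t:{0..1}|lborel. (if mh h s t \<ge> r then 1 else 0))"

end

theory Submission
  imports Defs
begin

lemma pw0:
  fixes b c :: real assumes b: "b > 0" and c: "c \<ge> 0"
  shows "(\<integral>\<^sup>+x. indicator {0..c} x * ennreal (x powr (b-1)) \<partial>lborel) = ennreal (c powr b / b)"
proof -
  have "((\<lambda>x. x powr (b-1)) has_integral (c powr (b-1+1) / (b-1+1))) {0..c}"
    using has_integral_powr_from_0[of "b-1" c] b c by simp
  then have "(\<integral>\<^sup>+x. ennreal (x powr (b-1)) * indicator {0..c} x \<partial>lborel) = ennreal (c powr b / b)"
    by (subst nn_integral_has_integral_lebesgue') auto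
  then show ?thesis by (simp add: mult.commute)
qed

lemma pw_right:
  fixes b s \<beta> :: real assumes b: "b > 0" and c: "s \<le> \<beta>"
  shows "(\<integral>\<^sup>+t. indicator {s..\<beta>} t * ennreal ((t - s) powr (b-1)) \<partial>lborel) = ennreal ((\<beta> - s) powr b / b)"
proof -
  have "(\<integral>\<^sup>+t. indicator {s..\<beta>} t * ennreal ((t - s) powr (b-1)) \<partial>lborel)
     = ennreal \<bar>1::real\<bar> * (\<integral>\<^sup>+x. indicator {s..\<beta>} (s + 1 * x) * ennreal ((s + 1 * x - s) powr (b-1)) \<partial>lborel)"
    by (rule nn_integral_real_affine) auto
  also have "\<dots> = (\<integral>\<^sup>+x. indicator {0..\<beta>-s} x * ennreal (x powr (b-1)) \<partial>lborel)"
    by (simp, intro nn_integral_cong) (auto simp: indicator_def)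
  also have "\<dots> = ennreal ((\<beta> - s) powr b / b)" using pw0 b c by simp
  finally show ?thesis .
qed

lemma pw_left:
  fixes b s \<alpha> :: real assumes b: "b > 0" and c: "\<alpha> \<le> s"
  shows "(\<integral>\<^sup>+t. indicator {\<alpha>..s} t * ennreal ((s - t) powr (b-1)) \<partial>lborel) = ennreal ((s - \<alpha>) powr b / b)"
proof -
  have "(\<integral>\<^sup>+t. indicator {\<alpha>..s} t * ennreal ((s - t) powr (b-1)) \<partial>lborel)
     = ennreal \<bar>-1::real\<bar> * (\<integral>\<^sup>+x. indicator {\<alpha>..s} (s + -1 * x) * ennreal ((s - (s + -1 * x)) powr (b-1)) \<partial>lborel)"
    by (rule nn_integral_real_affine) auto
  also have "\<dots> = (\<integral>\<^sup>+x. indicator {0..s-\<alpha>} x * ennreal (x powr (b-1)) \<partial>lborel)"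
    by (simp, intro nn_integral_cong) (auto simp: indicator_def)
  also have "\<dots> = ennreal ((s - \<alpha>) powr b / b)" using pw0 b c by simp
  finally show ?thesis .
qed

lemma pw_abs:
  fixes a s \<alpha> \<beta> :: real assumes a: "a > 0" and "\<alpha> \<le> s" "s \<le> \<beta>"
  shows "(\<integral>\<^sup>+t. indicator {\<alpha>..\<beta>} t * ennreal (\<bar>t - s\<bar> powr (a-1)) \<partial>lborel)
     = ennreal (((s - \<alpha>) powr a + (\<beta> - s) powr a) / a)"
proof -
  have "(\<integral>\<^sup>+t. indicator {\<alpha>..\<beta>} t * ennreal (\<bar>t - s\<bar> powr (a-1)) \<partial>lborel)
     = (\<integral>\<^sup>+t. indicator {\<alpha>..s} t * ennreal ((s - t) powr (a-1)) + indicator {s..\<beta>} t * ennreal ((t - s) powr (a-1)) \<partial>lborel)"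
    using assms by (intro nn_integral_cong) (auto simp: indicator_def abs_if)
  also have "\<dots> = (\<integral>\<^sup>+t. indicator {\<alpha>..s} t * ennreal ((s - t) powr (a-1)) \<partial>lborel) + (\<integral>\<^sup>+t. indicator {s..\<beta>} t * ennreal ((t - s) powr (a-1)) \<partial>lborel)"
    by (rule nn_integral_add) auto
  also have "\<dots> = ennreal ((s - \<alpha>) powr a / a) + ennreal ((\<beta> - s) powr a / a)"
    using pw_left pw_right assms by simp
  also have "\<dots> = ennreal (((s - \<alpha>) powr a + (\<beta> - s) powr a) / a)"
    using a by (simp add: ennreal_plus[symmetric] add_divide_distrib del: ennreal_plus)
  finally show ?thesis .
qed


lemma ennreal_ind_mult: "ennreal (indicator A x * f) = indicator A x * ennreal f"
  by (auto simp: indicator_def)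

lemma core:
  fixes E :: "(real \<times> real) set" and a :: real
  assumes a: "a > 0" and Em[measurable]: "E \<in> sets borel"
    and sym: "\<And>s t. (s,t) \<in> E \<Longrightarrow> (t,s) \<in> E"
    and sec: "\<And>s t. (s,t) \<in> E \<Longrightarrow> \<exists>\<alpha> \<beta>. \<alpha> \<le> s \<and> s \<le> \<beta> \<and> {t. (s,t)\<in>E} = {\<alpha>..\<beta>}"
    and tr: "\<And>s t. (s,t) \<in> E \<Longrightarrow> {u. (t,u)\<in>E} = {u. (s,u)\<in>E}"
  shows "ennreal (a*(a+1)) * (\<integral>\<^sup>+s. \<integral>\<^sup>+t. indicator E (s,t) * ennreal (\<bar>t-s\<bar> powr (a-1)) \<partial>lborel \<partial>lborel)
       = 2 * (\<integral>\<^sup>+s. ennreal (measure lborel {t. (s,t)\<in>E} powr a) \<partial>lborel)"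
proof -
  define A where "A s = {t. (s,t)\<in>E}" for s
  define \<sigma> where "\<sigma> s = measure lborel (A s)" for s
  define K where "K s = (\<integral>\<^sup>+t. indicator E (s,t) * ennreal (\<bar>t-s\<bar> powr (a-1)) \<partial>lborel)" for s
  define \<iota> where "\<iota> s = (if \<sigma> s > 0 then 1 / \<sigma> s else 0)" for s
  have indA: "indicator E (s,t) = (indicator (A s) t :: 'b::{zero_neq_one})" for s t
    by (auto simp: indicator_def A_def)
  have Em2: "E \<in> sets (lborel \<Otimes>\<^sub>M lborel)" by (subst lborel_prod) simp
  have Em3[measurable]: "E \<in> sets (borel \<Otimes>\<^sub>M borel)" by (subst borel_prod) (rule Em)
  have Kmeas[measurable]: "K \<in> borel_measurable borel"
  proof -
    have "(\<lambda>s. K s) \<in> borel_measurable lborel"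
      unfolding K_def by (rule lborel.borel_measurable_nn_integral) measurable
    then show ?thesis by simp
  qed
  have \<sigma>meas[measurable]: "\<sigma> \<in> borel_measurable borel"
  proof -
    have "(\<lambda>s. emeasure lborel (Pair s -` E)) \<in> borel_measurable lborel"
      by (rule lborel.measurable_emeasure_Pair[OF Em2])
    then have "(\<lambda>s. enn2real (emeasure lborel (Pair s -` E))) \<in> borel_measurable lborel"
      by measurable
    moreover have "Pair s -` E = A s" for s by (auto simp: A_def)
    ultimately show ?thesis unfolding \<sigma>_def measure_def by simp
  qed
  have \<iota>meas[measurable]: "\<iota> \<in> borel_measurable borel"
    unfolding \<iota>_def by measurable
  have Kcases: "A s = {} \<and> K s = 0 \<or> (\<exists>\<alpha> \<beta>. \<alpha> \<le> s \<and> s \<le> \<beta> \<and> A s = {\<alpha>..\<beta>} \<and> \<sigma> s = \<beta> - \<alpha> \<and>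
      K s = ennreal (((s - \<alpha>) powr a + (\<beta> - s) powr a) / a))" for s
  proof (cases "A s = {}")
    case True
    then show ?thesis by (simp add: K_def indA)
  next
    case False
    then obtain t where "(s,t) \<in> E" by (auto simp: A_def)
    from sec[OF this] obtain \<alpha> \<beta> where ab: "\<alpha> \<le> s" "s \<le> \<beta>" "A s = {\<alpha>..\<beta>}" by (auto simp: A_def)
    have "K s = ennreal (((s - \<alpha>) powr a + (\<beta> - s) powr a) / a)"
      unfolding K_def indA ab(3) using pw_abs[OF a ab(1,2)] by simp
    moreover have "\<sigma> s = \<beta> - \<alpha>" using ab by (simp add: \<sigma>_def)
    ultimately show ?thesis using ab by blast
  qed
  have step2: "K s = (\<integral>\<^sup>+t. indicator E (s,t) * (K s * ennreal (\<iota> s)) \<partial>lborel)" for s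
  proof -
    from Kcases[of s] show ?thesis
    proof
      assume "A s = {} \<and> K s = 0" then show ?thesis by simp
    next
      assume "\<exists>\<alpha> \<beta>. \<alpha> \<le> s \<and> s \<le> \<beta> \<and> A s = {\<alpha>..\<beta>} \<and> \<sigma> s = \<beta> - \<alpha> \<and>
          K s = ennreal (((s - \<alpha>) powr a + (\<beta> - s) powr a) / a)"
      then obtain \<alpha> \<beta> where ab: "\<alpha> \<le> s" "s \<le> \<beta>" "A s = {\<alpha>..\<beta>}" "\<sigma> s = \<beta> - \<alpha>"
          "K s = ennreal (((s - \<alpha>) powr a + (\<beta> - s) powr a) / a)" by blast
      have "(\<integral>\<^sup>+t. indicator E (s,t) * (K s * ennreal (\<iota> s)) \<partial>lborel) = ennreal (\<beta> - \<alpha>) * (K s * ennreal (\<iota> s))"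
        unfolding indA ab(3) using ab by (simp add: nn_integral_multc)
      also have "\<dots> = K s"
      proof (cases "\<beta> - \<alpha> > 0")
        case True
        then have "ennreal (\<beta> - \<alpha>) * ennreal (\<iota> s) = 1"
          by (simp add: \<iota>_def ab(4) ennreal_mult[symmetric])
        then show ?thesis by (metis mult.assoc mult.commute mult_1)
      next
        case False
        then have "\<alpha> = s" "\<beta> = s" using ab by auto
        then show ?thesis using ab(5) by simp
      qed
      finally show ?thesis by simp
    qed
  qed
  have step4: "(\<integral>\<^sup>+s. indicator E (s,t) * (K s * ennreal (\<iota> s)) \<partial>lborel) = ennreal (2 / (a*(a+1)) * \<sigma> t powr a)" for t
  proof (cases "A t = {}")
    case True
    then have "(s,t) \<notin> E" for s using sym by (auto simp: A_def)
    then show ?thesis using True by (simp add: \<sigma>_def)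
  next
    case False
    then obtain t' where "(t,t') \<in> E" by (auto simp: A_def)
    from sec[OF this] obtain \<alpha> \<beta> where ab: "\<alpha> \<le> t" "t \<le> \<beta>" "A t = {\<alpha>..\<beta>}" by (auto simp: A_def)
    have st: "\<sigma> t = \<beta> - \<alpha>" using ab by (simp add: \<sigma>_def)
    have pt: "indicator E (s,t) * (K s * ennreal (\<iota> s)) = ennreal (\<iota> t / a * (indicator {\<alpha>..\<beta>} s * (s - \<alpha>) powr a + indicator {\<alpha>..\<beta>} s * (\<beta> - s) powr a))" for s
    proof (cases "s \<in> {\<alpha>..\<beta>}")
      case True
      then have "(t,s) \<in> E" using ab by (auto simp: A_def)
      then have Es: "(s,t) \<in> E" by (rule sym)
      have "A s = A t" using tr[OF \<open>(t,s) \<in> E\<close>] by (simp add: A_def)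
      then have "\<sigma> s = \<sigma> t" "\<iota> s = \<iota> t" by (simp_all add: \<sigma>_def \<iota>_def)
      from Kcases[of s] \<open>A s = A t\<close> ab True
      have "K s = ennreal (((s - \<alpha>) powr a + (\<beta> - s) powr a) / a)"
      proof (elim disjE exE conjE)
        fix \<alpha>' \<beta>' assume "\<alpha>' \<le> s" "s \<le> \<beta>'" "A s = {\<alpha>'..\<beta>'}" "K s = ennreal (((s - \<alpha>') powr a + (\<beta>' - s) powr a) / a)"
        moreover have "\<alpha>' = \<alpha> \<and> \<beta>' = \<beta>" using \<open>A s = A t\<close> ab \<open>A s = {\<alpha>'..\<beta>'}\<close> \<open>\<alpha>' \<le> s\<close> \<open>s \<le> \<beta>'\<close>
          by (metis atLeastatMost_empty_iff2 cInf_atLeastAtMost cSup_atLeastAtMost order_trans)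
        ultimately show ?thesis by simp
      qed (use ab True in auto)
      moreover have "\<iota> t \<ge> 0" by (simp add: \<iota>_def)
      ultimately show ?thesis using Es True \<open>\<iota> s = \<iota> t\<close> a
        by (simp add: ennreal_mult[symmetric] field_simps)
    next
      case False
      then have "(t,s) \<notin> E" using ab by (auto simp: A_def)
      then have "(s,t) \<notin> E" using sym by blast
      then show ?thesis using False by simp
    qed
    have "(\<integral>\<^sup>+s. indicator E (s,t) * (K s * ennreal (\<iota> s)) \<partial>lborel)
        = (\<integral>\<^sup>+s. ennreal (\<iota> t / a) * (ennreal (indicator {\<alpha>..\<beta>} s * (s - \<alpha>) powr a) + ennreal (indicator {\<alpha>..\<beta>} s * (\<beta> - s) powr a)) \<partial>lborel)"
      unfolding pt using a by (intro nn_integral_cong) (simp add: \<iota>_def ennreal_mult[symmetric] ennreal_plus[symmetric] del: ennreal_plus)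
    also have "\<dots> = ennreal (\<iota> t / a) * ((\<integral>\<^sup>+s. ennreal (indicator {\<alpha>..\<beta>} s * (s - \<alpha>) powr a) \<partial>lborel) + (\<integral>\<^sup>+s. ennreal (indicator {\<alpha>..\<beta>} s * (\<beta> - s) powr a) \<partial>lborel))"
      by (simp add: nn_integral_cmult nn_integral_add)
    also have "(\<integral>\<^sup>+s. ennreal (indicator {\<alpha>..\<beta>} s * (s - \<alpha>) powr a) \<partial>lborel) = ennreal ((\<beta> - \<alpha>) powr (a+1) / (a+1))"
      using pw_right[of "a+1" \<alpha> \<beta>] a ab by (simp add: ennreal_ind_mult)
    also have "(\<integral>\<^sup>+s. ennreal (indicator {\<alpha>..\<beta>} s * (\<beta> - s) powr a) \<partial>lborel) = ennreal ((\<beta> - \<alpha>) powr (a+1) / (a+1))"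
      using pw_left[of "a+1" \<alpha> \<beta>] a ab by (simp add: ennreal_ind_mult)
    also have "ennreal (\<iota> t / a) * (ennreal ((\<beta> - \<alpha>) powr (a+1) / (a+1)) + ennreal ((\<beta> - \<alpha>) powr (a+1) / (a+1)))
        = ennreal (2 / (a*(a+1)) * \<sigma> t powr a)"
    proof (cases "\<beta> - \<alpha> > 0")
      case True
      have "\<iota> t / a * ((\<beta> - \<alpha>) powr (a+1) / (a+1) + (\<beta> - \<alpha>) powr (a+1) / (a+1)) = 2 / (a*(a+1)) * \<sigma> t powr a"
      proof -
        have e1: "(\<beta> - \<alpha>) powr (a+1) = (\<beta> - \<alpha>) powr a * (\<beta> - \<alpha>)" using True by (simp add: powr_add)
        have e2: "\<iota> t = 1 / (\<beta> - \<alpha>)" using True by (simp add: \<iota>_def st)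
        have gen: "1 / L / a * (P * L / (a+1) + P * L / (a+1)) = 2 / (a*(a+1)) * P" if "L > 0" for L P :: real
        proof -
          have h: "a + 1 > 0" using a by simp
          have "P * L / (a+1) + P * L / (a+1) = 2*P*L/(a+1)" by simp
          also have "1 / L / a * \<dots> = 2 / (a*(a+1)) * P" using that a h by (simp add: divide_simps)
          finally show ?thesis by simp
        qed
        show ?thesis unfolding e1 e2 st using gen[OF True] by simp
      qed
      then show ?thesis using a True
        by (simp add: \<iota>_def ennreal_mult[symmetric] ennreal_plus[symmetric] del: ennreal_plus)
    next
      case False
      then have "\<beta> = \<alpha>" using ab by simp
      then show ?thesis using ab st by (simp add: \<iota>_def)
    qed
    finally show ?thesis .
  qed
  have "(\<integral>\<^sup>+s. \<integral>\<^sup>+t. indicator E (s,t) * ennreal (\<bar>t-s\<bar> powr (a-1)) \<partial>lborel \<partial>lborel) = (\<integral>\<^sup>+s. K s \<partial>lborel)"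
    by (simp add: K_def)
  also have "\<dots> = (\<integral>\<^sup>+s. \<integral>\<^sup>+t. indicator E (s,t) * (K s * ennreal (\<iota> s)) \<partial>lborel \<partial>lborel)"
    using step2 by simp
  also have "\<dots> = (\<integral>\<^sup>+t. \<integral>\<^sup>+s. indicator E (s,t) * (K s * ennreal (\<iota> s)) \<partial>lborel \<partial>lborel)"
    by (rule lborel_pair.Fubini'[symmetric]) measurable
  also have "\<dots> = (\<integral>\<^sup>+t. ennreal (2 / (a*(a+1))) * ennreal (\<sigma> t powr a) \<partial>lborel)"
    using step4 a by (intro nn_integral_cong) (simp add: ennreal_mult[symmetric])
  also have "\<dots> = ennreal (2 / (a*(a+1))) * (\<integral>\<^sup>+t. ennreal (\<sigma> t powr a) \<partial>lborel)"
    by (simp add: nn_integral_cmult)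
  finally have "ennreal (a*(a+1)) * (\<integral>\<^sup>+s. \<integral>\<^sup>+t. indicator E (s,t) * ennreal (\<bar>t-s\<bar> powr (a-1)) \<partial>lborel \<partial>lborel)
     = (ennreal (a*(a+1)) * ennreal (2 / (a*(a+1)))) * (\<integral>\<^sup>+t. ennreal (\<sigma> t powr a) \<partial>lborel)"
    by (simp add: mult.assoc)
  also have "ennreal (a*(a+1)) * ennreal (2 / (a*(a+1))) = 2"
    using a by (simp add: ennreal_mult[symmetric])
  finally show ?thesis by (simp add: \<sigma>_def A_def)
qed

definition PP :: "(real \<Rightarrow> real) \<Rightarrow> real \<Rightarrow> real \<Rightarrow> real \<Rightarrow> bool" where
  "PP h s t r \<longleftrightarrow> s \<in> {0..1} \<and> t \<in> {0..1} \<and> (\<forall>u\<in>{0..1}. r \<le> h ((1-u) * s + u * t))"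

definition QQ :: "(real \<Rightarrow> real) \<Rightarrow> real \<Rightarrow> real \<Rightarrow> real \<Rightarrow> bool" where
  "QQ h s t r \<longleftrightarrow> s \<in> {0..1} \<and> t \<in> {0..1} \<and> (\<forall>v\<in>{min s t..max s t}. r \<le> h v)"

lemma convex_in_minmax:
  fixes s t u :: real assumes "u \<in> {0..1}"
  shows "(1-u) * s + u * t \<in> {min s t..max s t}"
proof -
  have "(1-u)*min s t + u * min s t \<le> (1-u) * s + u * t"
    using assms by (intro add_mono mult_left_mono) auto
  moreover have "(1-u) * s + u * t \<le> (1-u)*max s t + u * max s t"
    using assms by (intro add_mono mult_left_mono) auto
  ultimately show ?thesis by (simp add: algebra_simps)
qed

lemma PP_QQ: "PP h s t r = QQ h s t r"
proof
  assume P: "PP h s t r"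
  show "QQ h s t r" unfolding QQ_def
  proof (intro conjI ballI)
    show "s \<in> {0..1}" "t \<in> {0..1}" using P by (auto simp: PP_def)
    fix v assume v: "v \<in> {min s t..max s t}"
    show "r \<le> h v"
    proof (cases "s = t")
      case True
      then have "v = s" using v by auto
      then show ?thesis using P by (auto simp: PP_def dest: bspec[where x=0])
    next
      case False
      define u where "u = (v - s) / (t - s)"
      have "u \<in> {0..1}" using v False
        by (auto simp: u_def divide_simps min_def max_def split: if_splits)
      moreover have "(1-u) * s + u * t = v"
      proof -
        have "(1-u) * s + u * t = s + u * (t - s)" by (simp add: algebra_simps)
        also have "u * (t - s) = v - s" using False by (simp add: u_def)
        finally show ?thesis by simp
      qed
      ultimately show ?thesis using P by (auto simp: PP_def)
    qed
  qed
next
  assume Q: "QQ h s t r"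
  then show "PP h s t r" using convex_in_minmax unfolding PP_def QQ_def by blast
qed

lemma mh_QQ:
  assumes nn: "\<forall>x\<in>{0..1}. h x \<ge> 0" and st: "s \<in> {0..1}" "t \<in> {0..1}"
  shows "(r \<le> mh h s t) \<longleftrightarrow> QQ h s t r"
proof -
  have sub: "{min s t..max s t} \<subseteq> {0..1}" using st by auto
  have bdd: "bdd_below (h ` {min s t..max s t})"
  proof (rule bdd_belowI[where m=0])
    fix y assume "y \<in> h ` {min s t..max s t}"
    then obtain x where "x \<in> {min s t..max s t}" "y = h x" by auto
    then show "0 \<le> y" using nn sub by blast
  qed
  have ne: "{min s t..max s t} \<noteq> {}" by auto
  show ?thesis unfolding mh_def QQ_def using le_cINF_iff[OF ne bdd] st by simp
qed

lemma mh_nonneg: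
  assumes nn: "\<forall>x\<in>{0..1}. h x \<ge> 0" and st: "s \<in> {0..1}" "t \<in> {0..1}"
  shows "0 \<le> mh h s t"
proof -
  have sub: "{min s t..max s t} \<subseteq> {0..1}" using st by auto
  have "\<forall>v\<in>{min s t..max s t}. 0 \<le> h v"
  proof
    fix v assume "v \<in> {min s t..max s t}"
    then have "v \<in> {0..1}" using sub by blast
    then show "0 \<le> h v" using nn by blast
  qed
  then have "QQ h s t 0" using st by (simp add: QQ_def)
  then show ?thesis using mh_QQ[OF assms, of 0] by simp
qed

lemma closed_PP:
  fixes f1 f2 f3 :: "'a::metric_space \<Rightarrow> real"
  assumes h: "continuous_on {0..1} h"
    and c: "continuous_on UNIV f1" "continuous_on UNIV f2" "continuous_on UNIV f3"
  shows "closed {x. PP h (f1 x) (f2 x) (f3 x)}"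
proof -
  define D where "D = {x. f1 x \<in> {0..1} \<and> f2 x \<in> {0..1}}"
  have cD: "closed D"
  proof -
    have "D = f1 -` {0..1} \<inter> f2 -` {0..1}" by (auto simp: D_def)
    moreover have "closed (f1 -` {0..1})" "closed (f2 -` {0..1})"
      using c by (auto intro!: continuous_closed_vimage simp: continuous_on_eq_continuous_at)
    ultimately show ?thesis by auto
  qed
  have cu: "closed {x \<in> D. f3 x \<le> h ((1-u) * f1 x + u * f2 x)}" if u: "u \<in> {0..1}" for u
  proof (rule continuous_on_closed_Collect_le[OF _ _ cD])
    show "continuous_on D f3" using c(3) by (rule continuous_on_subset) auto
    have "continuous_on D f1" "continuous_on D f2" using c(1,2) by (auto intro: continuous_on_subset)
    then have "continuous_on D (\<lambda>x. (1-u) * f1 x + u * f2 x)"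
      by (intro continuous_intros)
    moreover have "(\<lambda>x. (1-u) * f1 x + u * f2 x) ` D \<subseteq> {0..1}"
    proof
      fix y assume "y \<in> (\<lambda>x. (1-u) * f1 x + u * f2 x) ` D"
      then obtain x where x: "x \<in> D" "y = (1-u) * f1 x + u * f2 x" by auto
      then have "y \<in> {min (f1 x) (f2 x)..max (f1 x) (f2 x)}" using convex_in_minmax[OF u] by simp
      then show "y \<in> {0..1}" using x(1) by (auto simp: D_def)
    qed
    ultimately show "continuous_on D (\<lambda>x. h ((1-u) * f1 x + u * f2 x))"
      by (rule continuous_on_compose2[OF h])
  qed
  have eq: "{x. PP h (f1 x) (f2 x) (f3 x)} = D \<inter> (\<Inter>u\<in>{0..1}. {x \<in> D. f3 x \<le> h ((1-u) * f1 x + u * f2 x)})"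
    by (auto simp: PP_def D_def)
  have ci: "closed (\<Inter>u\<in>{0..1}. {x \<in> D. f3 x \<le> h ((1-u) * f1 x + u * f2 x)})"
    using cu by (intro closed_INT) blast
  show ?thesis unfolding eq by (rule closed_Int[OF cD ci])
qed


lemma QQ_sym: "QQ h s t r \<Longrightarrow> QQ h t s r"
  by (auto simp: QQ_def min.commute max.commute)

lemma QQ_trans: "QQ h s t r \<Longrightarrow> QQ h t u r \<Longrightarrow> QQ h s u r"
proof -
  assume a1: "QQ h s t r" and a2: "QQ h t u r"
  have "v \<in> {min s t..max s t} \<or> v \<in> {min t u..max t u}" if "v \<in> {min s u..max s u}" for v
    using that by (auto simp: min_def max_def split: if_splits)
  then show ?thesis using a1 a2 unfolding QQ_def by blast
qed

lemma PP_sym: "PP h s t r \<Longrightarrow> PP h t s r"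
  using QQ_sym PP_QQ by metis

lemma PP_tr: "PP h s t r \<Longrightarrow> {u. PP h t u r} = {u. PP h s u r}"
  unfolding PP_QQ using QQ_sym QQ_trans by blast

lemma PP_sec:
  assumes h: "continuous_on {0..1} h" and P: "PP h s t r"
  shows "\<exists>\<alpha> \<beta>. \<alpha> \<le> s \<and> s \<le> \<beta> \<and> {t. PP h s t r} = {\<alpha>..\<beta>}"
proof -
  define A where "A = {t. PP h s t r}"
  have cA: "closed A" unfolding A_def
    using closed_PP[OF h, of "\<lambda>_. s" "\<lambda>x. x" "\<lambda>_. r"] by (simp add: continuous_on_const continuous_on_id)
  have sub: "A \<subseteq> {0..1}" by (auto simp: A_def PP_def)
  have bb: "bdd_below A" "bdd_above A" using sub by (auto intro: bdd_below_mono bdd_above_mono)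
  have Q: "QQ h s t r" using P PP_QQ by metis
  then have "r \<le> h s" by (auto simp: QQ_def)
  then have sA: "s \<in> A" using Q by (auto simp: A_def PP_QQ QQ_def)
  then have ne: "A \<noteq> {}" by auto
  define \<alpha> where "\<alpha> = Inf A"
  define \<beta> where "\<beta> = Sup A"
  have aA: "\<alpha> \<in> A" unfolding \<alpha>_def using closed_contains_Inf[OF ne bb(1) cA] .
  have bA: "\<beta> \<in> A" unfolding \<beta>_def using closed_contains_Sup[OF ne bb(2) cA] .
  have as: "\<alpha> \<le> s" unfolding \<alpha>_def using sA bb by (simp add: cInf_lower)
  have sb: "s \<le> \<beta>" unfolding \<beta>_def using sA bb by (simp add: cSup_upper)
  have "A = {\<alpha>..\<beta>}"
  proof
    show "A \<subseteq> {\<alpha>..\<beta>}" unfolding \<alpha>_def \<beta>_def using bb by (auto intro: cInf_lower cSup_upper)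
  next
    show "{\<alpha>..\<beta>} \<subseteq> A"
    proof
      fix x assume x: "x \<in> {\<alpha>..\<beta>}"
      have x01: "x \<in> {0..1}" using x aA bA sub by auto
      show "x \<in> A"
      proof (cases "x \<le> s")
        case True
        have "QQ h s \<alpha> r" using aA by (simp add: A_def PP_QQ)
        moreover have "{min s x..max s x} \<subseteq> {min s \<alpha>..max s \<alpha>}" using True x as by auto
        ultimately have "QQ h s x r" using x01 unfolding QQ_def by blast
        then show ?thesis by (simp add: A_def PP_QQ)
      next
        case False
        have "QQ h s \<beta> r" using bA by (simp add: A_def PP_QQ)
        moreover have "{min s x..max s x} \<subseteq> {min s \<beta>..max s \<beta>}" using False x sb by auto
        ultimately have "QQ h s x r" using x01 unfolding QQ_def by blast
        then show ?thesis by (simp add: A_def PP_QQ)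
      qed
    qed
  qed
  then show ?thesis using as sb by (auto simp: A_def)
qed


lemma PP_h: "PP h s t r \<Longrightarrow> r \<le> h s"
  unfolding PP_def by (drule conjunct2, drule conjunct2, drule bspec[where x=0]) auto

lemma PP_01: "PP h s t r \<Longrightarrow> s \<in> {0..1} \<and> t \<in> {0..1}"
  unfolding PP_def by auto

lemma closedQ3:
  assumes hc: "continuous_on {0..1} h"
  shows "{y::(real\<times>real)\<times>real. PP h (fst (fst y)) (snd y) (snd (fst y))} \<in> sets ((lborel \<Otimes>\<^sub>M lborel) \<Otimes>\<^sub>M lborel)"
proof -
  have "closed {y::(real\<times>real)\<times>real. PP h (fst (fst y)) (snd y) (snd (fst y))}"
    by (rule closed_PP[OF hc]) (intro continuous_intros)+
  then show ?thesis by (simp only: lborel_prod) simp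
qed

lemma meas_sg:
  assumes hc: "continuous_on {0..1} h"
  shows "(\<lambda>x. measure lborel {t. PP h (fst x) t (snd x)}) \<in> borel_measurable (lborel \<Otimes>\<^sub>M lborel)"
proof -
  have "(\<lambda>x. emeasure lborel (Pair x -` {y::(real\<times>real)\<times>real. PP h (fst (fst y)) (snd y) (snd (fst y))})) \<in> borel_measurable (lborel \<Otimes>\<^sub>M lborel)"
    by (rule lborel.measurable_emeasure_Pair[OF closedQ3[OF hc]])
  then have "(\<lambda>x. enn2real (emeasure lborel (Pair x -` {y::(real\<times>real)\<times>real. PP h (fst (fst y)) (snd y) (snd (fst y))}))) \<in> borel_measurable (lborel \<Otimes>\<^sub>M lborel)"
    by measurable
  moreover have "Pair x -` {y::(real\<times>real)\<times>real. PP h (fst (fst y)) (snd y) (snd (fst y))} = {t. PP h (fst x) t (snd x)}" for x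
    by auto
  ultimately show ?thesis unfolding measure_def by simp
qed

lemma sigma_eq:
  assumes nn: "\<forall>x\<in>{0..1}. h x \<ge> 0" and s: "s \<in> {0..1}"
  shows "sigma_rs r s h = measure lborel {t. PP h s t r}"
proof -
  have "(\<lambda>t. indicator {0..1} t *\<^sub>R (if mh h s t \<ge> r then 1 else 0)) = (indicator {t. PP h s t r} :: real \<Rightarrow> real)"
  proof
    fix t
    show "indicator {0..1} t *\<^sub>R (if mh h s t \<ge> r then 1 else 0) = (indicator {t. PP h s t r} t :: real)"
    proof (cases "t \<in> {0..1}")
      case True
      then show ?thesis using mh_QQ[OF nn s True, of r] by (simp add: PP_QQ indicator_def)
    next
      case False
      then show ?thesis by (auto simp: indicator_def PP_def)
    qed
  qed
  then show ?thesis unfolding sigma_rs_def set_lebesgue_integral_def by simp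
qed


theorem lemma8p6:
  fixes h :: "real \<Rightarrow> real" and a :: real
  assumes "continuous_on {0..1} h"
    and "\<forall>x\<in>{0..1}. h x \<ge> 0"
    and "a > 0"
  shows "2 * (LINT s:{0..1}|lborel. (LINT r:{0..h s}|lborel. (sigma_rs r s h) powr a))
       = a * (a + 1) * (LINT p:{0..1::real}\<times>{0..1::real}|(lborel \<Otimes>\<^sub>M lborel).
            \<bar>snd p - fst p\<bar> powr (a - 1) * mh h (fst p) (snd p))"
proof -
  note hc = assms(1) and nn = assms(2) and a = assms(3)
  define sg where "sg r s = measure lborel {t. PP h s t r}" for r s
  have sgm0: "(\<lambda>x. sg (snd x) (fst x)) \<in> borel_measurable (lborel \<Otimes>\<^sub>M lborel)"
    unfolding sg_def using meas_sg[OF hc] by simp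
  have sgm[measurable]: "(\<lambda>x. sg (snd x) (fst x)) \<in> borel_measurable (borel \<Otimes>\<^sub>M borel)"
    using sgm0 by (simp cong: measurable_cong_sets)
  have sg_nonneg: "0 \<le> sg r s" for r s by (simp add: sg_def)
  have sg_le1: "sg r s \<le> 1" for r s
  proof -
    have "emeasure lborel {t. PP h s t r} \<le> emeasure lborel {0..1::real}"
      by (rule emeasure_mono) (auto simp: PP_def)
    then have "sg r s \<le> measure lborel {0..1::real}" unfolding sg_def measure_def
      by (intro enn2real_mono) auto
    then show ?thesis by simp
  qed
  have sg0: "sg r s = 0" if "r > h s \<or> s \<notin> {0..1}" for r s
  proof -
    have "{t. PP h s t r} = {}"
    proof (intro equals0I)
      fix t assume "t \<in> {t. PP h s t r}"
      then have P: "PP h s t r" by simp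
      from PP_h[OF P] PP_01[OF P] that show False by auto
    qed
    then show ?thesis by (simp add: sg_def)
  qed
  have sgr[measurable]: "(\<lambda>r. sg r s) \<in> borel_measurable borel" for s
  proof -
    have "(\<lambda>r. (s, r)) \<in> borel \<rightarrow>\<^sub>M borel \<Otimes>\<^sub>M borel" by measurable
    from measurable_compose[OF this sgm] show ?thesis by simp
  qed
  have sgs[measurable]: "(\<lambda>s. sg r s) \<in> borel_measurable borel" for r
  proof -
    have "(\<lambda>s. (s, r)) \<in> borel \<rightarrow>\<^sub>M borel \<Otimes>\<^sub>M borel" by measurable
    from measurable_compose[OF this sgm] show ?thesis by simp
  qed
  define F where "F s r = indicator {0<..} r * ennreal (sg r s powr a)" for s r :: real
  have Fm: "case_prod F \<in> borel_measurable (lborel \<Otimes>\<^sub>M lborel)"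
  proof -
    have "(\<lambda>x. indicator {0<..} (snd x) * ennreal (sg (snd x) (fst x) powr a)) \<in> borel_measurable (borel \<Otimes>\<^sub>M borel)"
      by measurable
    then show ?thesis by (simp add: F_def case_prod_beta' cong: measurable_cong_sets)
  qed
  define N where "N s = (\<integral>\<^sup>+r. F s r \<partial>lborel)" for s
  have Nm[measurable]: "N \<in> borel_measurable borel"
  proof -
    have "(\<lambda>s. \<integral>\<^sup>+r. F s r \<partial>lborel) \<in> borel_measurable lborel"
      by (rule lborel.borel_measurable_nn_integral[OF Fm])
    then show ?thesis by (simp add: N_def[abs_def])
  qed
  have L1: "(LINT r:{0..h s}|lborel. sigma_rs r s h powr a) = enn2real (N s)" if s: "s \<in> {0..1}" for s
  proof -
    have "(LINT r:{0..h s}|lborel. sigma_rs r s h powr a) = integral\<^sup>L lborel (\<lambda>r. indicator {0..h s} r * sg r s powr a)"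
      unfolding set_lebesgue_integral_def using sigma_eq[OF nn s] by (simp add: sg_def)
    also have "\<dots> = enn2real (\<integral>\<^sup>+r. ennreal (indicator {0..h s} r * sg r s powr a) \<partial>lborel)"
      by (rule integral_eq_nn_integral) auto
    also have "(\<integral>\<^sup>+r. ennreal (indicator {0..h s} r * sg r s powr a) \<partial>lborel) = N s"
      unfolding N_def
    proof (rule nn_integral_cong_AE)
      show "AE r in lborel. ennreal (indicator {0..h s} r * sg r s powr a) = F s r"
        using AE_lborel_singleton[of 0]
      proof (rule AE_mp, intro AE_I2 impI)
        fix r :: real assume "r \<noteq> 0"
        then show "ennreal (indicator {0..h s} r * sg r s powr a) = F s r"
          using sg0[of s r] by (cases "r > h s") (auto simp: F_def indicator_def)
      qed
    qed
    finally show ?thesis .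
  qed
  have L2: "N s \<noteq> top" for s
  proof (cases "s \<in> {0..1}")
    case True
    then have hs: "h s \<ge> 0" using nn by blast
    have "N s \<le> (\<integral>\<^sup>+r. indicator {0<..h s} r \<partial>lborel)"
      unfolding N_def
    proof (rule nn_integral_mono)
      fix r
      show "F s r \<le> indicator {0<..h s} r"
      proof (cases "r > h s")
        case True then show ?thesis using sg0[of s r] by (simp add: F_def)
      next
        case False
        have "sg r s powr a \<le> 1" using sg_le1 sg_nonneg a by (intro powr_le1) auto
        then show ?thesis using False by (auto simp: F_def indicator_def)
      qed
    qed
    also have "\<dots> = ennreal (h s)" using hs by simp
    finally have "N s \<le> ennreal (h s)" .
    then have "N s < top" using ennreal_less_top by (rule le_less_trans)
    then show ?thesis by simp
  next
    case False
    then have "N s = 0" using sg0 by (simp add: N_def F_def)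
    then show ?thesis by simp
  qed
  have L3: "N s = 0" if "s \<notin> {0..1}" for s
    using sg0 that by (simp add: N_def F_def)
  define Z where "Z r = (\<integral>\<^sup>+s. ennreal (sg r s powr a) \<partial>lborel)" for r
  define TL where "TL r = (\<integral>\<^sup>+s. F s r \<partial>lborel)" for r
  have TLm[measurable]: "TL \<in> borel_measurable borel"
  proof -
    have "(\<lambda>x. indicator {0<..} (fst x) * ennreal (sg (fst x) (snd x) powr a)) \<in> borel_measurable (borel \<Otimes>\<^sub>M borel)"
    proof -
      have "(\<lambda>x. (snd x, fst x)) \<in> (borel \<Otimes>\<^sub>M borel) \<rightarrow>\<^sub>M (borel \<Otimes>\<^sub>M borel :: (real \<times> real) measure)" by measurable
      from measurable_compose[OF this sgm] have [measurable]: "(\<lambda>x. sg (fst x) (snd x)) \<in> borel_measurable (borel \<Otimes>\<^sub>M borel)" by simp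
      show ?thesis by measurable
    qed
    then have "case_prod (\<lambda>r s. F s r) \<in> borel_measurable (lborel \<Otimes>\<^sub>M lborel)"
      by (simp add: F_def case_prod_beta' cong: measurable_cong_sets)
    from lborel.borel_measurable_nn_integral[OF this] show ?thesis by (simp add: TL_def[abs_def])
  qed
  have TLZ: "TL r = (if r > 0 then Z r else 0)" for r
    by (simp add: TL_def Z_def F_def)
  have LHS: "(LINT s:{0..1}|lborel. (LINT r:{0..h s}|lborel. (sigma_rs r s h) powr a)) = enn2real (\<integral>\<^sup>+r. TL r \<partial>lborel)"
  proof -
    have "(LINT s:{0..1}|lborel. (LINT r:{0..h s}|lborel. (sigma_rs r s h) powr a)) = integral\<^sup>L lborel (\<lambda>s. enn2real (N s))"
      unfolding set_lebesgue_integral_def[of lborel "{0..1::real}"]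
    proof (intro Bochner_Integration.integral_cong refl)
      fix s :: real
      show "indicator {0..1} s *\<^sub>R (LINT r:{0..h s}|lborel. (sigma_rs r s h) powr a) = enn2real (N s)"
        by (cases "s \<in> {0..1}") (simp_all add: L1 L3)
    qed
    also have "\<dots> = enn2real (\<integral>\<^sup>+s. ennreal (enn2real (N s)) \<partial>lborel)"
      by (rule integral_eq_nn_integral) auto
    also have "(\<integral>\<^sup>+s. ennreal (enn2real (N s)) \<partial>lborel) = (\<integral>\<^sup>+s. N s \<partial>lborel)"
      using L2 by (intro nn_integral_cong) (simp add: ennreal_enn2real_if)
    also have "\<dots> = (\<integral>\<^sup>+r. TL r \<partial>lborel)"
      unfolding N_def TL_def by (rule lborel_pair.Fubini'[OF Fm, symmetric])
    finally show ?thesis .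
  qed
  define Sq where "Sq = {0..1::real} \<times> {0..1::real}"
  define Q' where "Q' = {y::(real\<times>real)\<times>real. PP h (fst (fst y)) (snd (fst y)) (snd y)}"
  have cQ': "closed Q'" unfolding Q'_def
    by (rule closed_PP[OF hc]) (intro continuous_intros)+
  have Q'm[measurable]: "Q' \<in> sets (borel \<Otimes>\<^sub>M borel)"
    by (subst borel_prod) (simp add: borel_closed cQ')
  define E where "E r = {p::real\<times>real. PP h (fst p) (snd p) r}" for r
  have cE: "closed (E r)" for r unfolding E_def
    by (rule closed_PP[OF hc]) (intro continuous_intros)+
  define w where "w p = \<bar>snd p - fst p\<bar> powr (a-1)" for p :: "real\<times>real"
  have wm[measurable]: "w \<in> borel_measurable borel"
  proof -
    have "w \<in> borel_measurable (borel \<Otimes>\<^sub>M borel)" unfolding w_def by measurable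
    then show ?thesis by (simp only: borel_prod)
  qed
  define Mp where "Mp p = enn2real (\<integral>\<^sup>+r. indicator {0<..} r * indicator Q' (p,r) \<partial>lborel)" for p
  have R1: "(\<integral>\<^sup>+r. indicator {0<..} r * indicator Q' (p,r) \<partial>lborel) = ennreal (mh h (fst p) (snd p))"
    if p: "p \<in> Sq" for p
  proof -
    have p01: "fst p \<in> {0..1}" "snd p \<in> {0..1}" using p by (auto simp: Sq_def)
    have "(\<lambda>r. indicator {0<..} r * indicator Q' (p,r)) = (indicator {0<..mh h (fst p) (snd p)} :: real \<Rightarrow> ennreal)"
    proof
      fix r
      show "indicator {0<..} r * indicator Q' (p,r) = (indicator {0<..mh h (fst p) (snd p)} r :: ennreal)"
        using mh_QQ[OF nn p01, of r] by (auto simp: indicator_def Q'_def PP_QQ)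
    qed
    then show ?thesis using mh_nonneg[OF nn p01] by simp
  qed
  have Mp_eq: "Mp p = mh h (fst p) (snd p)" if "p \<in> Sq" for p
    using R1[OF that] mh_nonneg[OF nn] that by (auto simp: Mp_def Sq_def)
  have Mpm[measurable]: "Mp \<in> borel_measurable borel"
  proof -
    have "(\<lambda>x. indicator {0<..} (snd x) * indicator Q' (fst x, snd x) :: ennreal) \<in> borel_measurable (borel \<Otimes>\<^sub>M borel)"
      by measurable
    then have "case_prod (\<lambda>p r. indicator {0<..} r * indicator Q' (p,r) :: ennreal) \<in> borel_measurable (borel \<Otimes>\<^sub>M lborel)"
      by (simp add: case_prod_beta' cong: measurable_cong_sets)
    from lborel.borel_measurable_nn_integral[OF this]
    show ?thesis unfolding Mp_def by measurable
  qed
  define G where "G p r = indicator {0<..} r * indicator Q' (p,r) * ennreal (w p)" for p r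
  have Gm: "case_prod G \<in> borel_measurable (lborel \<Otimes>\<^sub>M lborel)"
  proof -
    have "(\<lambda>x. indicator {0<..} (snd x) * indicator Q' (fst x, snd x) * ennreal (w (fst x))) \<in> borel_measurable (borel \<Otimes>\<^sub>M borel)"
      by measurable
    then show ?thesis by (simp add: G_def case_prod_beta' cong: measurable_cong_sets)
  qed
  define TR where "TR r = (\<integral>\<^sup>+p. G p r \<partial>lborel)" for r
  have TRm[measurable]: "TR \<in> borel_measurable borel"
  proof -
    have "(\<lambda>x. indicator {0<..} (fst x) * indicator Q' (snd x, fst x) * ennreal (w (snd x))) \<in> borel_measurable (borel \<Otimes>\<^sub>M borel)"
      by measurable
    then have "case_prod (\<lambda>r p. G p r) \<in> borel_measurable (lborel \<Otimes>\<^sub>M lborel)"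
      by (simp add: G_def case_prod_beta' cong: measurable_cong_sets)
    from lborel.borel_measurable_nn_integral[OF this] show ?thesis by (simp add: TR_def[abs_def])
  qed
  have RHS: "(LINT p:{0..1::real}\<times>{0..1::real}|(lborel \<Otimes>\<^sub>M lborel). \<bar>snd p - fst p\<bar> powr (a - 1) * mh h (fst p) (snd p))
      = enn2real (\<integral>\<^sup>+r. TR r \<partial>lborel)"
  proof -
    have "(LINT p:{0..1::real}\<times>{0..1::real}|(lborel \<Otimes>\<^sub>M lborel). \<bar>snd p - fst p\<bar> powr (a - 1) * mh h (fst p) (snd p))
       = integral\<^sup>L lborel (\<lambda>p. indicator Sq p * (w p * Mp p))"
      unfolding lborel_prod set_lebesgue_integral_def
    proof (intro Bochner_Integration.integral_cong refl)
      fix p :: "real \<times> real"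
      show "indicator ({0..1} \<times> {0..1}) p *\<^sub>R (\<bar>snd p - fst p\<bar> powr (a - 1) * mh h (fst p) (snd p)) = indicator Sq p * (w p * Mp p)"
        by (cases "p \<in> Sq") (auto simp: Sq_def Mp_eq w_def)
    qed
    also have "\<dots> = enn2real (\<integral>\<^sup>+p. ennreal (indicator Sq p * (w p * Mp p)) \<partial>lborel)"
    proof (rule integral_eq_nn_integral)
      have Sqm[measurable]: "Sq \<in> sets borel" unfolding Sq_def by (intro borel_closed closed_Times) auto
      show "(\<lambda>p. indicator Sq p * (w p * Mp p)) \<in> borel_measurable lborel" by measurable
      show "AE p in lborel. 0 \<le> indicator Sq p * (w p * Mp p)" by (auto simp: Mp_def w_def)
    qed
    also have "(\<integral>\<^sup>+p. ennreal (indicator Sq p * (w p * Mp p)) \<partial>lborel) = (\<integral>\<^sup>+p. \<integral>\<^sup>+r. G p r \<partial>lborel \<partial>lborel)"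
    proof (intro nn_integral_cong)
      fix p :: "real \<times> real"
      show "ennreal (indicator Sq p * (w p * Mp p)) = (\<integral>\<^sup>+r. G p r \<partial>lborel)"
      proof (cases "p \<in> Sq")
        case True
        have "ennreal (indicator Sq p * (w p * Mp p)) = (\<integral>\<^sup>+r. indicator {0<..} r * indicator Q' (p,r) \<partial>lborel) * ennreal (w p)"
          using True R1[OF True] Mp_eq[OF True] mh_nonneg[OF nn]
          by (auto simp: Sq_def w_def ennreal_mult' mult.commute)
        also have "\<dots> = (\<integral>\<^sup>+r. G p r \<partial>lborel)"
          unfolding G_def by (rule nn_integral_multc[symmetric]) measurable
        finally show ?thesis .
      next
        case False
        have "(p, r) \<notin> Q'" for r
        proof
          assume "(p, r) \<in> Q'"
          then have "PP h (fst p) (snd p) r" by (simp add: Q'_def)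
          from PP_01[OF this] False show False by (cases p) (auto simp: Sq_def)
        qed
        then show ?thesis using False by (simp add: G_def)
      qed
    qed
    also have "\<dots> = (\<integral>\<^sup>+r. TR r \<partial>lborel)"
      unfolding TR_def by (rule lborel_pair.Fubini'[OF Gm, symmetric])
    finally show ?thesis .
  qed
  have core_r: "ennreal (a*(a+1)) * TR r = 2 * TL r" for r
  proof (cases "r > 0")
    case False
    then show ?thesis by (simp add: TR_def G_def TLZ)
  next
    case True
    have Em[measurable]: "E r \<in> sets borel" using cE by (simp add: borel_closed)
    have "TR r = (\<integral>\<^sup>+p. indicator (E r) p * ennreal (\<bar>snd p - fst p\<bar> powr (a-1)) \<partial>lborel)"
      unfolding TR_def G_def using True
      by (intro nn_integral_cong) (simp add: indicator_def Q'_def E_def w_def)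
    also have "\<dots> = (\<integral>\<^sup>+s. \<integral>\<^sup>+t. indicator (E r) (s,t) * ennreal (\<bar>t-s\<bar> powr (a-1)) \<partial>lborel \<partial>lborel)"
    proof -
      have Em3[measurable]: "E r \<in> sets (borel \<Otimes>\<^sub>M borel)" by (subst borel_prod) (rule Em)
      have "(\<lambda>p. indicator (E r) p * ennreal (\<bar>snd p - fst p\<bar> powr (a-1))) \<in> borel_measurable (lborel \<Otimes>\<^sub>M lborel)"
        by measurable
      from lborel.nn_integral_fst[OF this] show ?thesis by (simp add: lborel_prod)
    qed
    finally have eq1: "TR r = \<dots>" .
    have "ennreal (a*(a+1)) * (\<integral>\<^sup>+s. \<integral>\<^sup>+t. indicator (E r) (s,t) * ennreal (\<bar>t-s\<bar> powr (a-1)) \<partial>lborel \<partial>lborel)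
        = 2 * (\<integral>\<^sup>+s. ennreal (measure lborel {t. (s,t)\<in>E r} powr a) \<partial>lborel)"
    proof (rule core[OF a Em])
      show "(t, s) \<in> E r" if "(s, t) \<in> E r" for s t using that PP_sym by (simp add: E_def)
      show "\<exists>\<alpha> \<beta>. \<alpha> \<le> s \<and> s \<le> \<beta> \<and> {t. (s, t) \<in> E r} = {\<alpha>..\<beta>}" if "(s, t) \<in> E r" for s t
        using that PP_sec[OF hc] by (simp add: E_def)
      show "{u. (t, u) \<in> E r} = {u. (s, u) \<in> E r}" if "(s, t) \<in> E r" for s t
        using that PP_tr by (simp add: E_def)
    qed
    also have "(\<integral>\<^sup>+s. ennreal (measure lborel {t. (s,t)\<in>E r} powr a) \<partial>lborel) = TL r"
      using True by (simp add: TLZ Z_def sg_def E_def)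
    finally show ?thesis using eq1 by simp
  qed
  have "ennreal (a*(a+1)) * (\<integral>\<^sup>+r. TR r \<partial>lborel) = (\<integral>\<^sup>+r. ennreal (a*(a+1)) * TR r \<partial>lborel)"
    by (rule nn_integral_cmult[symmetric]) measurable
  also have "\<dots> = (\<integral>\<^sup>+r. 2 * TL r \<partial>lborel)" using core_r by simp
  also have "\<dots> = 2 * (\<integral>\<^sup>+r. TL r \<partial>lborel)"
    by (rule nn_integral_cmult) measurable
  finally have fin: "ennreal (a*(a+1)) * (\<integral>\<^sup>+r. TR r \<partial>lborel) = 2 * (\<integral>\<^sup>+r. TL r \<partial>lborel)" .
  have "a * (a + 1) * enn2real (\<integral>\<^sup>+r. TR r \<partial>lborel) = enn2real (ennreal (a*(a+1)) * (\<integral>\<^sup>+r. TR r \<partial>lborel))"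
    using a by (simp add: enn2real_mult)
  also have "\<dots> = 2 * enn2real (\<integral>\<^sup>+r. TL r \<partial>lborel)"
    unfolding fin by (simp add: enn2real_mult)
  finally show ?thesis unfolding LHS RHS by simp
qed

end
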